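(* Let $G$ be a group with subgroups $H,J$ such that $H\ne G$, $|J:H\cap J|=2$ and $|H:H\cap J|$ finite; let $g\in J\setminus(H\cap J)$, $K=H\cap H^g$, $\lambda=|K:H\cap J|$, $L=\langle K,g\rangle$, $\Gamma=\mathrm{Cos}(G,H,J)$ and $\Sigma=\mathrm{Cos}(G,H,L)$. Suppose $b$ is an odd integer and $J'$ is a subgroup with $\langle g^b\rangle\le J'\le J$ and $\mu=|J:J'|$ finite. Then $|J':H\cap J'|=2$, $|H:H\cap J'|$ is finite, $\Gamma'=\mathrm{Cos}(G,H,J')$ is $G$-arc-transitive, $\Gamma'$ is a $(G,\mu)$-extender of $\Gamma$, and $\Gamma'$ is a $(G,\lambda\mu)$-extender of $\Sigma$.
   Context: $\mathrm{Cos}(G,H,J)$ (for $H\ne G$, $|J:H\cap J|=2$, $|H:H\cap J|<\infty$) is the graph with vertex set $\{Hx:x\in G\}$, edge set $\{Jy:y\in G\}$, $Hx$ incident with $Jy$ iff $yx^{-1}\in JH$, with $G$ acting by right multiplication; multiple edges are allowed. The $\mu$-extender $\Gamma^{(\mu)}$ of a graph replaces every edge by $\mu$ edges with the same end vertices; $\Gamma'$ is a $(G,\mu)$-extender of $\Gamma$ if $\Gamma'\cong\Gamma^{(\mu)}$ and both are $G$-arc-transitive. *)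

theory Defs
  imports "HOL-Algebra.Algebra"
begin

record ('v, 'e) mgraph =
  mverts :: "'v set"
  medges :: "'e set"
  minc   :: "'v \<Rightarrow> 'e \<Rightarrow> bool"

(* Set of right cosets B x with x in A; |A:B| = card (cosets_in G A B). *)
definition cosets_in :: "('a, 'b) monoid_scheme \<Rightarrow> 'a set \<Rightarrow> 'a set \<Rightarrow> 'a set set" where
  "cosets_in G A B = {B #>\<^bsub>G\<^esub> a | a. a \<in> A}"

definition conj_sub :: "('a, 'b) monoid_scheme \<Rightarrow> 'a set \<Rightarrow> 'a \<Rightarrow> 'a set" where
  "conj_sub G H g = {inv\<^bsub>G\<^esub> g \<otimes>\<^bsub>G\<^esub> h \<otimes>\<^bsub>G\<^esub> g | h. h \<in> H}"

definition Cos :: "('a, 'b) monoid_scheme \<Rightarrow> 'a set \<Rightarrow> 'a set \<Rightarrow> ('a set, 'a set) mgraph" where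
  "Cos G H J = \<lparr> mverts = rcosets\<^bsub>G\<^esub> H, medges = rcosets\<^bsub>G\<^esub> J,
     minc = (\<lambda>V E. \<exists>x\<in>carrier G. \<exists>y\<in>carrier G.
                V = H #>\<^bsub>G\<^esub> x \<and> E = J #>\<^bsub>G\<^esub> y \<and>
                y \<otimes>\<^bsub>G\<^esub> inv\<^bsub>G\<^esub> x \<in> J <#>\<^bsub>G\<^esub> H) \<rparr>"

(* mu-extender: every edge replaced by mu parallel edges *)
definition mext :: "('v, 'e) mgraph \<Rightarrow> nat \<Rightarrow> ('v, 'e \<times> nat) mgraph" where
  "mext \<Gamma> \<mu> = \<lparr> mverts = mverts \<Gamma>, medges = medges \<Gamma> \<times> {..<\<mu>},
     minc = (\<lambda>v ei. minc \<Gamma> v (fst ei)) \<rparr>"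

definition mg_iso :: "('v, 'e) mgraph \<Rightarrow> ('w, 'f) mgraph \<Rightarrow> bool" where
  "mg_iso \<Gamma> \<Delta> \<longleftrightarrow> (\<exists>\<phi> \<psi>. bij_betw \<phi> (mverts \<Gamma>) (mverts \<Delta>) \<and>
      bij_betw \<psi> (medges \<Gamma>) (medges \<Delta>) \<and>
      (\<forall>v\<in>mverts \<Gamma>. \<forall>e\<in>medges \<Gamma>. minc \<Gamma> v e \<longleftrightarrow> minc \<Delta> (\<phi> v) (\<psi> e)))"

definition arcs :: "('v, 'e) mgraph \<Rightarrow> ('v \<times> 'e \<times> 'v) set" where
  "arcs \<Gamma> = {(u, e, v). u \<in> mverts \<Gamma> \<and> v \<in> mverts \<Gamma> \<and> e \<in> medges \<Gamma> \<and> u \<noteq> v \<and>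
                 minc \<Gamma> u e \<and> minc \<Gamma> v e}"

definition arc_transitive ::
  "('a, 'b) monoid_scheme \<Rightarrow> ('a \<Rightarrow> 'v \<Rightarrow> 'v) \<Rightarrow> ('a \<Rightarrow> 'e \<Rightarrow> 'e) \<Rightarrow> ('v, 'e) mgraph \<Rightarrow> bool" where
  "arc_transitive G av ae \<Gamma> \<longleftrightarrow>
     (\<forall>a\<in>carrier G. bij_betw (av a) (mverts \<Gamma>) (mverts \<Gamma>) \<and>
        bij_betw (ae a) (medges \<Gamma>) (medges \<Gamma>) \<and>
        (\<forall>v\<in>mverts \<Gamma>. \<forall>e\<in>medges \<Gamma>. minc \<Gamma> v e \<longleftrightarrow> minc \<Gamma> (av a v) (ae a e))) \<and>
     (\<forall>x\<in>arcs \<Gamma>. \<forall>y\<in>arcs \<Gamma>. \<exists>a\<in>carrier G.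
        (av a (fst x), ae a (fst (snd x)), av a (snd (snd x))) = y)"

definition rmult :: "('a, 'b) monoid_scheme \<Rightarrow> 'a \<Rightarrow> 'a set \<Rightarrow> 'a set" where
  "rmult G a S = S #>\<^bsub>G\<^esub> a"

definition G_arc_transitive_cos :: "('a, 'b) monoid_scheme \<Rightarrow> ('a set, 'a set) mgraph \<Rightarrow> bool" where
  "G_arc_transitive_cos G \<Gamma> \<longleftrightarrow> arc_transitive G (rmult G) (rmult G) \<Gamma>"

definition G_extender ::
  "('a, 'b) monoid_scheme \<Rightarrow> nat \<Rightarrow> ('a set, 'a set) mgraph \<Rightarrow> ('a set, 'a set) mgraph \<Rightarrow> bool" where
  "G_extender G \<mu> \<Gamma>' \<Gamma> \<longleftrightarrow> mg_iso \<Gamma>' (mext \<Gamma> \<mu>) \<and>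
      G_arc_transitive_cos G \<Gamma>' \<and> G_arc_transitive_cos G \<Gamma>"

end

theory Submission
  imports Defs
begin



context group begin

lemma cancel_l1 [simp]: "x \<in> carrier G \<Longrightarrow> y \<in> carrier G \<Longrightarrow> inv x \<otimes> (x \<otimes> y) = y"
  by (simp add: m_assoc[symmetric])

lemma cancel_l2 [simp]: "x \<in> carrier G \<Longrightarrow> y \<in> carrier G \<Longrightarrow> x \<otimes> (inv x \<otimes> y) = y"
  by (simp add: m_assoc[symmetric])

lemma rcos_eq:
  assumes "subgroup S G" "x \<in> carrier G" "y \<in> carrier G"
  shows "(S #> x = S #> y) \<longleftrightarrow> x \<otimes> inv y \<in> S"
proof
  assume "S #> x = S #> y"
  moreover have "x \<in> S #> x" using rcos_self[OF assms(2,1)] .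
  ultimately have "x \<in> S #> y" by simp
  then show "x \<otimes> inv y \<in> S" using subgroup.rcos_module_imp[OF assms(1) is_group assms(3)] by blast
next
  assume "x \<otimes> inv y \<in> S"
  then have "x \<in> S #> y" using subgroup.rcos_module_rev[OF assms(1) is_group assms(3,2)] by blast
  then have "S #> y = S #> x" by (rule repr_independence[OF _ assms(3,1)])
  then show "S #> x = S #> y" by (rule sym)
qed

lemma rcos_eq_self:
  assumes "subgroup S G" "x \<in> carrier G"
  shows "S #> x = S \<longleftrightarrow> x \<in> S"
proof -
  have "S #> \<one> = S" using coset_mult_one subgroup.subset[OF assms(1)] by blast
  then have "S #> x = S \<longleftrightarrow> x \<otimes> inv \<one> \<in> S" using rcos_eq[OF assms one_closed] by simp
  then show ?thesis using assms(2) by simp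
qed

lemma inv_mult_in:
  assumes "subgroup S G" "x \<in> carrier G" "y \<in> carrier G" "x \<otimes> inv y \<in> S"
  shows "y \<otimes> inv x \<in> S"
proof -
  have "inv (x \<otimes> inv y) \<in> S" using subgroup.m_inv_closed[OF assms(1,4)] .
  also have "inv (x \<otimes> inv y) = y \<otimes> inv x" using inv_mult_group[of x "inv y"] assms(2,3) by simp
  finally show ?thesis .
qed

end



context group begin

lemma cos_in_rcosets:
  assumes "B \<subseteq> carrier G" "A \<subseteq> carrier G"
  shows "cosets_in G B A \<subseteq> rcosets A"
  using assms by (auto simp: cosets_in_def RCOSETS_def)

lemma idx_mono_fin:
  assumes sA: "subgroup A G" and sB: "subgroup B G" and AB: "A \<subseteq> B" and C: "C \<subseteq> carrier G"
    and fin: "finite (cosets_in G C A)"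
  shows "finite (cosets_in G C B)"
proof -
  define h where "h Q = B #> (SOME c. c \<in> C \<and> Q = A #> c)" for Q
  have "cosets_in G C B \<subseteq> h ` cosets_in G C A"
  proof
    fix P assume "P \<in> cosets_in G C B"
    then obtain c where c: "c \<in> C" "P = B #> c" by (auto simp: cosets_in_def)
    have "\<exists>c'. c' \<in> C \<and> A #> c = A #> c'" using c by blast
    then have ex: "(SOME c'. c' \<in> C \<and> A #> c = A #> c') \<in> C \<and> A #> c = A #> (SOME c'. c' \<in> C \<and> A #> c = A #> c')"
      by (rule someI_ex)
    define c' where "c' = (SOME c'. c' \<in> C \<and> A #> c = A #> c')"
    have c': "c' \<in> C" "A #> c = A #> c'" using ex c'_def by auto
    have cc: "c \<in> carrier G" "c' \<in> carrier G" using c c' C by auto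
    have "c \<otimes> inv c' \<in> A" using rcos_eq[OF sA cc] c' by simp
    then have "B #> c = B #> c'" using rcos_eq[OF sB cc] AB by auto
    moreover have "h (A #> c) = B #> c'" unfolding h_def c'_def by simp
    ultimately show "P \<in> h ` cosets_in G C A" using c by (auto simp: cosets_in_def)
  qed
  then show ?thesis using fin finite_surj by blast
qed

lemma rcos_inj:
  assumes "Q \<subseteq> carrier G" "P \<subseteq> carrier G" "c \<in> carrier G" "Q #> c = P #> c"
  shows "Q = P"
proof -
  have "Q = (Q #> c) #> inv c" using assms coset_mult_assoc[of Q c "inv c"] by simp
  also have "\<dots> = (P #> c) #> inv c" using assms by simp
  also have "\<dots> = P" using assms coset_mult_assoc[of P c "inv c"] by simp
  finally show ?thesis .
qed

lemma fiber_cosets: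
  assumes sA: "subgroup A G" and sB: "subgroup B G" and AB: "A \<subseteq> B" and c: "c \<in> carrier G"
  shows "{Q \<in> rcosets A. Q \<subseteq> B #> c} = (\<lambda>Q. Q #> c) ` cosets_in G B A"
    and "card {Q \<in> rcosets A. Q \<subseteq> B #> c} = card (cosets_in G B A)"
    and "finite (cosets_in G B A) \<Longrightarrow> finite {Q \<in> rcosets A. Q \<subseteq> B #> c}"
proof -
  have Asub: "A \<subseteq> carrier G" and Bsub: "B \<subseteq> carrier G" using sA sB subgroup.subset by auto
  show eq: "{Q \<in> rcosets A. Q \<subseteq> B #> c} = (\<lambda>Q. Q #> c) ` cosets_in G B A"
  proof
    show "{Q \<in> rcosets A. Q \<subseteq> B #> c} \<subseteq> (\<lambda>Q. Q #> c) ` cosets_in G B A"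
    proof
      fix Q assume Q: "Q \<in> {Q \<in> rcosets A. Q \<subseteq> B #> c}"
      then obtain z where z: "z \<in> carrier G" "Q = A #> z" by (auto simp: RCOSETS_def)
      have "z \<in> Q" using z(2) rcos_self[OF z(1) sA] by simp
      then have "z \<in> B #> c" using Q by blast
      then have "z \<otimes> inv c \<in> B" using subgroup.rcos_module_imp[OF sB is_group c] by blast
      define b where "b = z \<otimes> inv c"
      have "b \<in> B" using b_def \<open>z \<otimes> inv c \<in> B\<close> by simp
      have bc: "b \<in> carrier G" using \<open>b \<in> B\<close> Bsub by blast
      have zb: "z = b \<otimes> c" unfolding b_def using z(1) c by (simp add: m_assoc)
      have "Q = (A #> b) #> c" unfolding coset_mult_assoc[OF Asub bc c] using z(2) zb by simp
      then show "Q \<in> (\<lambda>Q. Q #> c) ` cosets_in G B A" using \<open>b \<in> B\<close> by (auto simp: cosets_in_def)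
    qed
  next
    show "(\<lambda>Q. Q #> c) ` cosets_in G B A \<subseteq> {Q \<in> rcosets A. Q \<subseteq> B #> c}"
    proof
      fix Q assume "Q \<in> (\<lambda>Q. Q #> c) ` cosets_in G B A"
      then obtain b where b: "b \<in> B" "Q = (A #> b) #> c" by (auto simp: cosets_in_def)
      have bc: "b \<in> carrier G" using b Bsub by auto
      have Q: "Q = A #> (b \<otimes> c)" using b bc c Asub by (simp add: coset_mult_assoc)
      have "Q \<in> rcosets A" using Q rcosetsI Asub bc c by auto
      moreover have "Q \<subseteq> B #> c"
      proof
        fix x assume "x \<in> Q"
        then obtain a where a: "a \<in> A" "x = a \<otimes> (b \<otimes> c)" using Q by (auto simp: r_coset_def)
        have "a \<otimes> b \<in> B" using a b AB subgroup.m_closed[OF sB] by auto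
        moreover have "x = (a \<otimes> b) \<otimes> c" using a bc c Asub by (auto simp: m_assoc)
        ultimately show "x \<in> B #> c" by (auto simp: r_coset_def)
      qed
      ultimately show "Q \<in> {Q \<in> rcosets A. Q \<subseteq> B #> c}" by simp
    qed
  qed
  have inj: "inj_on (\<lambda>Q. Q #> c) (cosets_in G B A)"
  proof (rule inj_onI)
    fix Q P assume QP: "Q \<in> cosets_in G B A" "P \<in> cosets_in G B A" "Q #> c = P #> c"
    have sub: "cosets_in G B A \<subseteq> rcosets A" using cos_in_rcosets[OF Bsub Asub] .
    have "Q \<subseteq> carrier G" using subgroup.rcosets_carrier[OF sA is_group] QP(1) sub by blast
    moreover have "P \<subseteq> carrier G" using subgroup.rcosets_carrier[OF sA is_group] QP(2) sub by blast
    ultimately show "Q = P" using rcos_inj[OF _ _ c QP(3)] by blast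
  qed
  show "card {Q \<in> rcosets A. Q \<subseteq> B #> c} = card (cosets_in G B A)"
    unfolding eq using card_image[OF inj] .
  show "finite (cosets_in G B A) \<Longrightarrow> finite {Q \<in> rcosets A. Q \<subseteq> B #> c}"
    unfolding eq by simp
qed

lemma idx_mult:
  assumes sA: "subgroup A G" and sB: "subgroup B G" and sC: "subgroup C G"
    and AB: "A \<subseteq> B" and BC: "B \<subseteq> C"
    and f1: "finite (cosets_in G C B)" and f2: "finite (cosets_in G B A)"
  shows "finite (cosets_in G C A) \<and> card (cosets_in G C A) = card (cosets_in G C B) * card (cosets_in G B A)"
proof -
  have Asub: "A \<subseteq> carrier G" and Bsub: "B \<subseteq> carrier G" and Csub: "C \<subseteq> carrier G"
    using sA sB sC subgroup.subset by auto
  define F where "F D = {Q \<in> rcosets A. Q \<subseteq> D}" for D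
  have U: "cosets_in G C A = (\<Union>D\<in>cosets_in G C B. F D)"
  proof
    show "cosets_in G C A \<subseteq> (\<Union>D\<in>cosets_in G C B. F D)"
    proof
      fix Q assume "Q \<in> cosets_in G C A"
      then obtain c where c: "c \<in> C" "Q = A #> c" by (auto simp: cosets_in_def)
      have cc: "c \<in> carrier G" using c Csub by auto
      have "Q \<in> rcosets A" using c cc rcosetsI Asub by auto
      moreover have "Q \<subseteq> B #> c"
      proof
        fix x assume "x \<in> Q" then obtain a where "a \<in> A" "x = a \<otimes> c" using c by (auto simp: r_coset_def)
        then show "x \<in> B #> c" using AB by (auto simp: r_coset_def)
      qed
      ultimately show "Q \<in> (\<Union>D\<in>cosets_in G C B. F D)" using c by (auto simp: F_def cosets_in_def)
    qed
  next
    show "(\<Union>D\<in>cosets_in G C B. F D) \<subseteq> cosets_in G C A"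
    proof
      fix Q assume "Q \<in> (\<Union>D\<in>cosets_in G C B. F D)"
      then obtain c where c: "c \<in> C" "Q \<in> F (B #> c)" by (auto simp: cosets_in_def)
      have cc: "c \<in> carrier G" using c Csub by auto
      have "Q \<in> (\<lambda>Q. Q #> c) ` cosets_in G B A" using c fiber_cosets(1)[OF sA sB AB cc] by (simp add: F_def)
      then obtain b where b: "b \<in> B" "Q = (A #> b) #> c" by (auto simp: cosets_in_def)
      have "b \<in> carrier G" using b Bsub by auto
      then have "Q = A #> (b \<otimes> c)" using b cc Asub by (simp add: coset_mult_assoc)
      moreover have "b \<otimes> c \<in> C" using b c BC subgroup.m_closed[OF sC] by auto
      ultimately show "Q \<in> cosets_in G C A" by (auto simp: cosets_in_def)
    qed
  qed
  have finF: "\<forall>D\<in>cosets_in G C B. finite (F D)"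
    using fiber_cosets(3)[OF sA sB AB] f2 Csub by (auto simp: cosets_in_def F_def)
  have cardF: "\<forall>D\<in>cosets_in G C B. card (F D) = card (cosets_in G B A)"
    using fiber_cosets(2)[OF sA sB AB] Csub by (auto simp: cosets_in_def F_def)
  have disj: "\<forall>D1\<in>cosets_in G C B. \<forall>D2\<in>cosets_in G C B. D1 \<noteq> D2 \<longrightarrow> F D1 \<inter> F D2 = {}"
  proof (intro ballI impI)
    fix D1 D2 assume D: "D1 \<in> cosets_in G C B" "D2 \<in> cosets_in G C B" "D1 \<noteq> D2"
    have "D1 \<in> rcosets B" "D2 \<in> rcosets B" using D cos_in_rcosets Csub Bsub by auto
    then have dj: "D1 \<inter> D2 = {}" using rcos_disjoint[OF sB] D(3) by (auto simp: pairwise_def disjnt_def)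
    show "F D1 \<inter> F D2 = {}"
    proof (rule ccontr)
      assume "F D1 \<inter> F D2 \<noteq> {}"
      then obtain Q where Q: "Q \<in> rcosets A" "Q \<subseteq> D1" "Q \<subseteq> D2" by (auto simp: F_def)
      then obtain z where "z \<in> carrier G" "Q = A #> z" by (auto simp: RCOSETS_def)
      then have "z \<in> Q" using rcos_self sA by auto
      then show False using Q dj by auto
    qed
  qed
  have "finite (cosets_in G C A)" unfolding U using f1 finF by auto
  moreover have "card (cosets_in G C A) = (\<Sum>D\<in>cosets_in G C B. card (F D))"
    unfolding U by (rule card_UN_disjoint[OF f1 finF disj])
  moreover have "\<dots> = card (cosets_in G C B) * card (cosets_in G B A)"
    using cardF by simp
  ultimately show ?thesis by simp
qed

lemma idx_inter_fin:
  assumes sA: "subgroup A G" and sB: "subgroup B G" and sS: "subgroup S G" and AB: "A \<subseteq> B"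
    and fin: "finite (cosets_in G B A)"
  shows "finite (cosets_in G (S \<inter> B) (S \<inter> A))"
proof -
  have sSA: "subgroup (S \<inter> A) G" using sS sA subgroups_Inter_pair by blast
  have Bsub: "B \<subseteq> carrier G" using sB subgroup.subset by auto
  define r where "r Q = (SOME t. t \<in> S \<inter> B \<and> Q = (S \<inter> A) #> t)" for Q
  define f where "f Q = A #> r Q" for Q
  have rr: "r Q \<in> S \<inter> B \<and> Q = (S \<inter> A) #> r Q" if "Q \<in> cosets_in G (S \<inter> B) (S \<inter> A)" for Q
  proof -
    have "\<exists>t. t \<in> S \<inter> B \<and> Q = (S \<inter> A) #> t" using that by (auto simp: cosets_in_def)
    then show ?thesis unfolding r_def by (rule someI_ex)
  qed
  have "inj_on f (cosets_in G (S \<inter> B) (S \<inter> A))"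
  proof (rule inj_onI)
    fix Q P assume Q: "Q \<in> cosets_in G (S \<inter> B) (S \<inter> A)" and P: "P \<in> cosets_in G (S \<inter> B) (S \<inter> A)"
      and e: "f Q = f P"
    have rX: "r Q \<in> S \<inter> B" "Q = (S \<inter> A) #> r Q" using rr[OF Q] by auto
    have rY: "r P \<in> S \<inter> B" "P = (S \<inter> A) #> r P" using rr[OF P] by auto
    have c: "r Q \<in> carrier G" "r P \<in> carrier G" using rX rY Bsub by auto
    have "r Q \<otimes> inv r P \<in> A" using e rcos_eq[OF sA c] by (simp add: f_def)
    moreover have "r Q \<otimes> inv r P \<in> S" using rX rY subgroup.m_closed[OF sS] subgroup.m_inv_closed[OF sS] by auto
    ultimately have "r Q \<otimes> inv r P \<in> S \<inter> A" by simp
    then show "Q = P" using rcos_eq[OF sSA c] rX rY by simp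
  qed
  moreover have "f ` cosets_in G (S \<inter> B) (S \<inter> A) \<subseteq> cosets_in G B A"
    using rr by (auto simp: f_def cosets_in_def)
  ultimately show ?thesis using fin finite_subset inj_on_finite by blast
qed

end



context group begin

lemma set_mult_mem: "z \<in> M <#> H \<longleftrightarrow> (\<exists>m\<in>M. \<exists>h\<in>H. z = m \<otimes> h)"
  by (auto simp: set_mult_def)

lemma Cos_simps:
  "mverts (Cos G H M) = rcosets H" "medges (Cos G H M) = rcosets M"
  by (auto simp: Cos_def)

lemma minc_Cos:
  assumes sH: "subgroup H G" and sM: "subgroup M G" and x: "x \<in> carrier G" and y: "y \<in> carrier G"
  shows "minc (Cos G H M) (H #> x) (M #> y) \<longleftrightarrow> y \<otimes> inv x \<in> M <#> H"
proof
  assume "y \<otimes> inv x \<in> M <#> H"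
  then show "minc (Cos G H M) (H #> x) (M #> y)" using x y by (auto simp: Cos_def)
next
  assume "minc (Cos G H M) (H #> x) (M #> y)"
  then obtain x' y' where xy': "x' \<in> carrier G" "y' \<in> carrier G" "H #> x = H #> x'" "M #> y = M #> y'"
    "y' \<otimes> inv x' \<in> M <#> H" by (auto simp: Cos_def)
  obtain m h where mh: "m \<in> M" "h \<in> H" "y' \<otimes> inv x' = m \<otimes> h" using xy'(5) set_mult_mem by blast
  have h1: "x' \<otimes> inv x \<in> H" using rcos_eq[OF sH x xy'(1)] xy'(3) inv_mult_in[OF sH x xy'(1)] by simp
  have m1: "y \<otimes> inv y' \<in> M" using rcos_eq[OF sM y xy'(2)] xy'(4) by simp
  have mc: "m \<in> carrier G" "h \<in> carrier G" using mh sH sM subgroup.subset by auto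
  have "y \<otimes> inv x = (y \<otimes> inv y') \<otimes> (y' \<otimes> inv x') \<otimes> (x' \<otimes> inv x)"
    using x y xy' by (simp add: m_assoc)
  also have "\<dots> = ((y \<otimes> inv y') \<otimes> m) \<otimes> (h \<otimes> (x' \<otimes> inv x))"
    using mh mc x y xy' by (simp add: m_assoc)
  finally have "y \<otimes> inv x = ((y \<otimes> inv y') \<otimes> m) \<otimes> (h \<otimes> (x' \<otimes> inv x))" .
  moreover have "(y \<otimes> inv y') \<otimes> m \<in> M" using m1 mh subgroup.m_closed[OF sM] by blast
  moreover have "h \<otimes> (x' \<otimes> inv x) \<in> H" using h1 mh subgroup.m_closed[OF sH] by blast
  ultimately show "y \<otimes> inv x \<in> M <#> H" using set_mult_mem by blast
qed

lemma inc_char: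
  assumes sH: "subgroup H G" and sM: "subgroup M G" and c: "c \<in> M"
    and R: "\<forall>m\<in>M. m \<in> H \<or> inv c \<otimes> m \<in> H"
    and x: "x \<in> carrier G" and y: "y \<in> carrier G"
  shows "y \<otimes> inv x \<in> M <#> H \<longleftrightarrow> (H #> x = H #> y \<or> H #> x = H #> (inv c \<otimes> y))"
proof -
  have cc: "c \<in> carrier G" using c sM subgroup.subset by auto
  show ?thesis
  proof
    assume "y \<otimes> inv x \<in> M <#> H"
    then obtain m h where mh: "m \<in> M" "h \<in> H" "y \<otimes> inv x = m \<otimes> h" using set_mult_mem by blast
    have mc: "m \<in> carrier G" "h \<in> carrier G" using mh sH sM subgroup.subset by auto
    show "H #> x = H #> y \<or> H #> x = H #> (inv c \<otimes> y)"
    proof (cases "m \<in> H")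
      case True
      then have "y \<otimes> inv x \<in> H" using mh subgroup.m_closed[OF sH] by auto
      then have "x \<otimes> inv y \<in> H" using inv_mult_in[OF sH y x] by simp
      then show ?thesis using rcos_eq[OF sH x y] by simp
    next
      case False
      then have i: "inv c \<otimes> m \<in> H" using R mh by auto
      have "inv c \<otimes> y \<otimes> inv x = (inv c \<otimes> m) \<otimes> h" using mh mc cc x y by (simp add: m_assoc)
      then have "inv c \<otimes> y \<otimes> inv x \<in> H" using i mh subgroup.m_closed[OF sH] by auto
      then have "x \<otimes> inv (inv c \<otimes> y) \<in> H" using inv_mult_in[OF sH _ x] cc y by simp
      then show ?thesis using rcos_eq[OF sH x] cc y by simp
    qed
  next
    assume "H #> x = H #> y \<or> H #> x = H #> (inv c \<otimes> y)"
    then show "y \<otimes> inv x \<in> M <#> H"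
    proof
      assume "H #> x = H #> y"
      then have "x \<otimes> inv y \<in> H" using rcos_eq[OF sH x y] by simp
      then have "y \<otimes> inv x \<in> H" using inv_mult_in[OF sH x y] by simp
      moreover have "y \<otimes> inv x = \<one> \<otimes> (y \<otimes> inv x)" using x y by simp
      ultimately show ?thesis using set_mult_mem subgroup.one_closed[OF sM] by blast
    next
      assume "H #> x = H #> (inv c \<otimes> y)"
      then have "x \<otimes> inv (inv c \<otimes> y) \<in> H" using rcos_eq[OF sH x] cc y by simp
      then have "inv c \<otimes> y \<otimes> inv x \<in> H" using inv_mult_in[OF sH x] cc y by simp
      moreover have "y \<otimes> inv x = c \<otimes> (inv c \<otimes> y \<otimes> inv x)" using x y cc by (simp add: m_assoc)
      ultimately show ?thesis using set_mult_mem c by blast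
    qed
  qed
qed

lemma rmult_bij:
  assumes sS: "subgroup S G" and a: "a \<in> carrier G"
  shows "bij_betw (rmult G a) (rcosets S) (rcosets S)"
proof -
  have Ssub: "S \<subseteq> carrier G" using sS subgroup.subset by auto
  have img: "rmult G b V \<in> rcosets S" if Vb: "V \<in> rcosets S" "b \<in> carrier G" for V b
  proof -
    obtain x where "x \<in> carrier G" "V = S #> x" using Vb by (auto simp: RCOSETS_def)
    then show ?thesis using Vb Ssub by (auto simp: rmult_def coset_mult_assoc intro!: rcosetsI)
  qed
  have inv1: "rmult G (inv a) (rmult G a V) = V" if "V \<in> rcosets S" for V
  proof -
    have "V \<subseteq> carrier G" using that subgroup.rcosets_carrier[OF sS is_group] by auto
    then show ?thesis using a coset_mult_assoc[of V a "inv a"] by (simp add: rmult_def)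
  qed
  have inv2: "rmult G a (rmult G (inv a) V) = V" if "V \<in> rcosets S" for V
  proof -
    have "V \<subseteq> carrier G" using that subgroup.rcosets_carrier[OF sS is_group] by auto
    then show ?thesis using a coset_mult_assoc[of V "inv a" a] by (simp add: rmult_def)
  qed
  show ?thesis
    by (rule bij_betwI[where g="rmult G (inv a)"]) (auto simp: img inv1 inv2 a)
qed

lemma Cos_auto:
  assumes sH: "subgroup H G" and sM: "subgroup M G" and a: "a \<in> carrier G"
  shows "bij_betw (rmult G a) (mverts (Cos G H M)) (mverts (Cos G H M)) \<and>
        bij_betw (rmult G a) (medges (Cos G H M)) (medges (Cos G H M)) \<and>
        (\<forall>v\<in>mverts (Cos G H M). \<forall>e\<in>medges (Cos G H M).
           minc (Cos G H M) v e \<longleftrightarrow> minc (Cos G H M) (rmult G a v) (rmult G a e))"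
proof (intro conjI ballI)
  show "bij_betw (rmult G a) (mverts (Cos G H M)) (mverts (Cos G H M))"
    using rmult_bij[OF sH a] by (simp add: Cos_simps)
  show "bij_betw (rmult G a) (medges (Cos G H M)) (medges (Cos G H M))"
    using rmult_bij[OF sM a] by (simp add: Cos_simps)
next
  fix v e assume v: "v \<in> mverts (Cos G H M)" and e: "e \<in> medges (Cos G H M)"
  obtain x where x: "x \<in> carrier G" "v = H #> x" using v by (auto simp: Cos_simps RCOSETS_def)
  obtain y where y: "y \<in> carrier G" "e = M #> y" using e by (auto simp: Cos_simps RCOSETS_def)
  have Hs: "H \<subseteq> carrier G" "M \<subseteq> carrier G" using sH sM subgroup.subset by auto
  have "rmult G a v = H #> (x \<otimes> a)" "rmult G a e = M #> (y \<otimes> a)"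
    using x y a Hs by (auto simp: rmult_def coset_mult_assoc)
  moreover have "(y \<otimes> a) \<otimes> inv (x \<otimes> a) = y \<otimes> inv x" using x y a by (simp add: inv_mult_group m_assoc)
  ultimately show "minc (Cos G H M) v e \<longleftrightarrow> minc (Cos G H M) (rmult G a v) (rmult G a e)"
    using minc_Cos[OF sH sM] x y a by simp
qed

lemma arc_trans_Cos:
  assumes sH: "subgroup H G" and sM: "subgroup M G" and c: "c \<in> M" and cH: "c \<notin> H"
    and R: "\<forall>m\<in>M. m \<in> H \<or> inv c \<otimes> m \<in> H"
  shows "G_arc_transitive_cos G (Cos G H M)"
proof -
  have cc: "c \<in> carrier G" using c sM subgroup.subset by auto
  have Hs: "H \<subseteq> carrier G" "M \<subseteq> carrier G" using sH sM subgroup.subset by auto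
  have c2: "inv c \<otimes> inv c \<in> H"
  proof -
    have "c \<otimes> c \<in> M" using c subgroup.m_closed[OF sM] by auto
    moreover have "inv c \<otimes> (c \<otimes> c) = c" using cc by (simp add: m_assoc[symmetric])
    ultimately have "c \<otimes> c \<in> H" using R cH by metis
    then have "inv (c \<otimes> c) \<in> H" using subgroup.m_inv_closed[OF sH] by auto
    then show ?thesis using cc by (simp add: inv_mult_group)
  qed
  define A1 where "A1 y = (H #> y, M #> y, H #> (inv c \<otimes> y))" for y
  have arcA: "\<exists>y\<in>carrier G. z = A1 y" if z: "z \<in> arcs (Cos G H M)" for z
  proof -
    obtain u e v where zz: "z = (u, e, v)" by (cases z) auto
    have u: "u \<in> rcosets H" and v: "v \<in> rcosets H" and e: "e \<in> rcosets M" and uv: "u \<noteq> v"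
      and iu: "minc (Cos G H M) u e" and iv: "minc (Cos G H M) v e"
      using z zz by (auto simp: arcs_def Cos_simps)
    obtain x1 where x1: "x1 \<in> carrier G" "u = H #> x1" using u by (auto simp: RCOSETS_def)
    obtain x2 where x2: "x2 \<in> carrier G" "v = H #> x2" using v by (auto simp: RCOSETS_def)
    obtain y where y: "y \<in> carrier G" "e = M #> y" using e by (auto simp: RCOSETS_def)
    have cu: "u = H #> y \<or> u = H #> (inv c \<otimes> y)"
      using iu minc_Cos[OF sH sM x1(1) y(1)] inc_char[OF sH sM c R x1(1) y(1)] x1 y by simp
    have cv: "v = H #> y \<or> v = H #> (inv c \<otimes> y)"
      using iv minc_Cos[OF sH sM x2(1) y(1)] inc_char[OF sH sM c R x2(1) y(1)] x2 y by simp
    show ?thesis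
    proof (cases "u = H #> y")
      case True
      then have "v = H #> (inv c \<otimes> y)" using cv uv by auto
      then show ?thesis using True zz y A1_def by auto
    next
      case False
      then have u': "u = H #> (inv c \<otimes> y)" and v': "v = H #> y" using cu cv uv by auto
      have iy: "inv c \<otimes> y \<in> carrier G" using cc y by simp
      have "M #> (inv c \<otimes> y) = M #> y"
        using rcos_eq[OF sM iy y(1)] cc y c subgroup.m_inv_closed[OF sM] by (simp add: m_assoc)
      moreover have "H #> (inv c \<otimes> (inv c \<otimes> y)) = H #> y"
      proof -
        have "inv c \<otimes> (inv c \<otimes> y) \<otimes> inv y = inv c \<otimes> inv c" using cc y by (simp add: m_assoc)
        then show ?thesis using rcos_eq[OF sH _ y(1)] cc y c2 by simp
      qed
      ultimately have "z = A1 (inv c \<otimes> y)" using zz u' v' y A1_def by simp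
      then show ?thesis using iy by blast
    qed
  qed
  show ?thesis unfolding G_arc_transitive_cos_def arc_transitive_def
  proof (rule conjI)
    show "\<forall>a\<in>carrier G. bij_betw (rmult G a) (mverts (Cos G H M)) (mverts (Cos G H M)) \<and>
        bij_betw (rmult G a) (medges (Cos G H M)) (medges (Cos G H M)) \<and>
        (\<forall>v\<in>mverts (Cos G H M). \<forall>e\<in>medges (Cos G H M).
           minc (Cos G H M) v e \<longleftrightarrow> minc (Cos G H M) (rmult G a v) (rmult G a e))"
      using Cos_auto[OF sH sM] by blast
  next
    show "\<forall>z1\<in>arcs (Cos G H M). \<forall>z2\<in>arcs (Cos G H M). \<exists>a\<in>carrier G.
        (rmult G a (fst z1), rmult G a (fst (snd z1)), rmult G a (snd (snd z1))) = z2"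
    proof (intro ballI)
    fix z1 z2 assume z1: "z1 \<in> arcs (Cos G H M)" and z2: "z2 \<in> arcs (Cos G H M)"
    obtain y1 where y1: "y1 \<in> carrier G" "z1 = A1 y1" using arcA[OF z1] by blast
    obtain y2 where y2: "y2 \<in> carrier G" "z2 = A1 y2" using arcA[OF z2] by blast
    define a where "a = inv y1 \<otimes> y2"
    have a: "a \<in> carrier G" using y1 y2 a_def by simp
    have "y1 \<otimes> a = y2" using y1 y2 a_def by (simp add: m_assoc[symmetric])
    moreover have "inv c \<otimes> y1 \<otimes> a = inv c \<otimes> y2" using y1 y2 a_def cc by (simp add: m_assoc)
    ultimately have "(rmult G a (fst z1), rmult G a (fst (snd z1)), rmult G a (snd (snd z1))) = z2"
      using y1 y2 a cc Hs by (simp add: A1_def rmult_def coset_mult_assoc)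
    then show "\<exists>a\<in>carrier G. (rmult G a (fst z1), rmult G a (fst (snd z1)), rmult G a (snd (snd z1))) = z2"
      using a by blast
    qed
  qed
qed

end



lemma fiber_bij:
  assumes fT: "\<forall>x\<in>S. f x \<in> T"
    and fib: "\<forall>t\<in>T. finite {x\<in>S. f x = t} \<and> card {x\<in>S. f x = t} = n"
  shows "\<exists>\<psi>. bij_betw \<psi> S (T \<times> {..<n}) \<and> (\<forall>x\<in>S. fst (\<psi> x) = f x)"
proof -
  have ex: "\<forall>t\<in>T. \<exists>\<beta>. bij_betw \<beta> {x\<in>S. f x = t} {..<n}"
  proof
    fix t assume t: "t \<in> T"
    then have fin: "finite {x\<in>S. f x = t}" and cd: "card {x\<in>S. f x = t} = n" using fib by auto
    obtain \<beta> where "bij_betw \<beta> {x\<in>S. f x = t} {0..<card {x\<in>S. f x = t}}"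
      using ex_bij_betw_finite_nat[OF fin] by blast
    then have "bij_betw \<beta> {x\<in>S. f x = t} {..<n}" unfolding cd lessThan_atLeast0 .
    then show "\<exists>\<beta>. bij_betw \<beta> {x\<in>S. f x = t} {..<n}" by blast
  qed
  obtain \<beta> where \<beta>: "\<forall>t\<in>T. bij_betw (\<beta> t) {x\<in>S. f x = t} {..<n}"
    using bchoice[OF ex] by blast
  have bt: "bij_betw (\<beta> t) {x\<in>S. f x = t} {..<n}" if "t \<in> T" for t
    using \<beta> that by blast
  have bx: "bij_betw (\<beta> (f x)) {z\<in>S. f z = f x} {..<n}" if "x \<in> S" for x
  proof -
    have "f x \<in> T" using fT that by blast
    then show ?thesis by (rule bt)
  qed
  define \<psi> where "\<psi> x = (f x, \<beta> (f x) x)" for x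
  have inj: "inj_on \<psi> S"
  proof (rule inj_onI)
    fix x y assume x: "x \<in> S" and y: "y \<in> S" and e: "\<psi> x = \<psi> y"
    have fe: "f x = f y" using e by (simp add: \<psi>_def)
    have be: "\<beta> (f x) x = \<beta> (f x) y" using e fe by (simp add: \<psi>_def)
    have xm: "x \<in> {z\<in>S. f z = f x}" using x by simp
    have ym: "y \<in> {z\<in>S. f z = f x}" using y fe by simp
    show "x = y" using inj_onD[OF bij_betw_imp_inj_on[OF bx[OF x]] be xm ym] .
  qed
  have img1: "\<psi> ` S \<subseteq> T \<times> {..<n}"
  proof
    fix z assume "z \<in> \<psi> ` S"
    then obtain x where x: "x \<in> S" "z = \<psi> x" by blast
    have xm: "x \<in> {z\<in>S. f z = f x}" using x by simp
    have "\<beta> (f x) x \<in> {..<n}" using bij_betw_apply[OF bx[OF x(1)] xm] .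
    moreover have "f x \<in> T" using fT x by blast
    ultimately show "z \<in> T \<times> {..<n}" using x by (simp add: \<psi>_def)
  qed
  have img2: "T \<times> {..<n} \<subseteq> \<psi> ` S"
  proof
    fix z assume z: "z \<in> T \<times> {..<n}"
    obtain t i where ti: "z = (t, i)" "t \<in> T" "i \<in> {..<n}" using z by blast
    have "\<beta> t ` {x\<in>S. f x = t} = {..<n}" using bij_betw_imp_surj_on[OF bt[OF ti(2)]] .
    then have "i \<in> \<beta> t ` {x\<in>S. f x = t}" using ti(3) by simp
    then obtain x where x: "x \<in> S" "f x = t" "\<beta> t x = i" by blast
    have "\<psi> x = z" using x ti by (simp add: \<psi>_def)
    then show "z \<in> \<psi> ` S" using x(1) by blast
  qed
  have "bij_betw \<psi> S (T \<times> {..<n})"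
    unfolding bij_betw_def using inj img1 img2 by blast
  moreover have "\<forall>x\<in>S. fst (\<psi> x) = f x" by (simp add: \<psi>_def)
  ultimately show ?thesis by blast
qed

context group begin

lemma mext_iso:
  assumes sH: "subgroup H G" and sA: "subgroup A G" and sM: "subgroup M G" and AM: "A \<subseteq> M"
    and fin: "finite (cosets_in G M A)"
    and same: "\<forall>x\<in>carrier G. \<forall>y\<in>carrier G. (y \<otimes> inv x \<in> A <#> H \<longleftrightarrow> y \<otimes> inv x \<in> M <#> H)"
  shows "mg_iso (Cos G H A) (mext (Cos G H M) (card (cosets_in G M A)))"
proof -
  define n where "n = card (cosets_in G M A)"
  have Asub: "A \<subseteq> carrier G" "M \<subseteq> carrier G" using sA sM subgroup.subset by auto
  define f where "f Q = M #> (SOME y. y \<in> carrier G \<and> Q = A #> y)" for Q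
  have fA: "f (A #> y) = M #> y" if y: "y \<in> carrier G" for y
  proof -
    have "\<exists>y'. y' \<in> carrier G \<and> A #> y = A #> y'" using y by blast
    then have ex: "(SOME y'. y' \<in> carrier G \<and> A #> y = A #> y') \<in> carrier G \<and>
       A #> y = A #> (SOME y'. y' \<in> carrier G \<and> A #> y = A #> y')" by (rule someI_ex)
    define y' where "y' = (SOME y'. y' \<in> carrier G \<and> A #> y = A #> y')"
    have y': "y' \<in> carrier G" "A #> y = A #> y'" using ex y'_def by auto
    have "y \<otimes> inv y' \<in> A" using rcos_eq[OF sA y y'(1)] y' by simp
    then have "M #> y = M #> y'" using rcos_eq[OF sM y y'(1)] AM by auto
    then show ?thesis unfolding f_def y'_def by simp
  qed
  have fT: "\<forall>Q\<in>rcosets A. f Q \<in> rcosets M"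
    using fA Asub by (auto simp: RCOSETS_def)
  have fib: "\<forall>t\<in>rcosets M. finite {Q\<in>rcosets A. f Q = t} \<and> card {Q\<in>rcosets A. f Q = t} = n"
  proof
    fix t assume "t \<in> rcosets M"
    then obtain y where y: "y \<in> carrier G" "t = M #> y" by (auto simp: RCOSETS_def)
    have "{Q\<in>rcosets A. f Q = t} = {Q \<in> rcosets A. Q \<subseteq> M #> y}"
    proof (intro Collect_cong conj_cong refl)
      fix Q assume "Q \<in> rcosets A"
      then obtain z where z: "z \<in> carrier G" "Q = A #> z" by (auto simp: RCOSETS_def)
      show "f Q = t \<longleftrightarrow> Q \<subseteq> M #> y"
      proof
        assume "f Q = t"
        then have "M #> z = M #> y" using fA z y by simp
        moreover have "A #> z \<subseteq> M #> z" using AM by (auto simp: r_coset_def)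
        ultimately show "Q \<subseteq> M #> y" using z by simp
      next
        assume "Q \<subseteq> M #> y"
        then have "z \<in> M #> y" using z rcos_self sA by auto
        then have "M #> y = M #> z" using repr_independence y sM by blast
        then show "f Q = t" using fA z y by simp
      qed
    qed
    then show "finite {Q\<in>rcosets A. f Q = t} \<and> card {Q\<in>rcosets A. f Q = t} = n"
      using fiber_cosets[OF sA sM AM y(1)] fin n_def by simp
  qed
  obtain \<psi> where \<psi>: "bij_betw \<psi> (rcosets A) ((rcosets M) \<times> {..<n})" "\<forall>Q\<in>rcosets A. fst (\<psi> Q) = f Q"
    using fiber_bij[OF fT fib] by blast
  show ?thesis unfolding mg_iso_def n_def[symmetric]
  proof (intro exI[of _ id] exI[of _ \<psi>] conjI ballI)
    show "bij_betw id (mverts (Cos G H A)) (mverts (mext (Cos G H M) n))"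
      by (simp add: mext_def Cos_simps)
    show "bij_betw \<psi> (medges (Cos G H A)) (medges (mext (Cos G H M) n))"
      using \<psi>(1) by (simp add: mext_def Cos_simps)
  next
    fix v Q assume v: "v \<in> mverts (Cos G H A)" and Q: "Q \<in> medges (Cos G H A)"
    obtain x where x: "x \<in> carrier G" "v = H #> x" using v by (auto simp: Cos_simps RCOSETS_def)
    obtain y where y: "y \<in> carrier G" "Q = A #> y" using Q by (auto simp: Cos_simps RCOSETS_def)
    have "fst (\<psi> Q) = M #> y" using \<psi>(2) Q fA y by (simp add: Cos_simps)
    then show "minc (Cos G H A) v Q = minc (mext (Cos G H M) n) (id v) (\<psi> Q)"
      using minc_Cos[OF sH sA x(1) y(1)] minc_Cos[OF sH sM x(1) y(1)] same x y
      by (simp add: mext_def)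
  qed
qed

end



context group begin

lemma three_in_two:
  assumes "card S = 2" "x \<in> S" "y \<in> S" "z \<in> S" "x \<noteq> y" "x \<noteq> z"
  shows "y = z"
  using assms unfolding card_2_iff by auto

lemma conj_sub_mem:
  assumes g: "g \<in> carrier G" and sH: "subgroup H G"
  shows "x \<in> conj_sub G H g \<longleftrightarrow> x \<in> carrier G \<and> g \<otimes> x \<otimes> inv g \<in> H"
proof
  assume "x \<in> conj_sub G H g"
  then obtain h where h: "h \<in> H" "x = inv g \<otimes> h \<otimes> g" by (auto simp: conj_sub_def)
  have hc: "h \<in> carrier G" using h sH subgroup.subset by auto
  have "g \<otimes> x \<otimes> inv g = h" using h hc g by (simp add: m_assoc)
  then show "x \<in> carrier G \<and> g \<otimes> x \<otimes> inv g \<in> H" using h hc g by simp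
next
  assume x: "x \<in> carrier G \<and> g \<otimes> x \<otimes> inv g \<in> H"
  have "x = inv g \<otimes> (g \<otimes> x \<otimes> inv g) \<otimes> g" using x g by (simp add: m_assoc)
  then show "x \<in> conj_sub G H g" using x unfolding conj_sub_def by blast
qed

lemma conj_sub_subgroup:
  assumes g: "g \<in> carrier G" and sH: "subgroup H G"
  shows "subgroup (conj_sub G H g) G"
proof (rule subgroupI)
  show "conj_sub G H g \<subseteq> carrier G" using conj_sub_mem[OF g sH] by auto
  show "conj_sub G H g \<noteq> {}" using conj_sub_mem[OF g sH, of \<one>] g subgroup.one_closed[OF sH] by auto
next
  fix a assume "a \<in> conj_sub G H g"
  then have a: "a \<in> carrier G" "g \<otimes> a \<otimes> inv g \<in> H" using conj_sub_mem[OF g sH] by auto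
  have "g \<otimes> inv a \<otimes> inv g = inv (g \<otimes> a \<otimes> inv g)" using a g by (simp add: inv_mult_group m_assoc)
  then show "inv a \<in> conj_sub G H g" using conj_sub_mem[OF g sH] a subgroup.m_inv_closed[OF sH] by auto
next
  fix a b assume "a \<in> conj_sub G H g" "b \<in> conj_sub G H g"
  then have a: "a \<in> carrier G" "g \<otimes> a \<otimes> inv g \<in> H" and b: "b \<in> carrier G" "g \<otimes> b \<otimes> inv g \<in> H"
    using conj_sub_mem[OF g sH] by auto
  have "g \<otimes> (a \<otimes> b) \<otimes> inv g = (g \<otimes> a \<otimes> inv g) \<otimes> (g \<otimes> b \<otimes> inv g)" using a b g by (simp add: m_assoc)
  then show "a \<otimes> b \<in> conj_sub G H g" using conj_sub_mem[OF g sH] a b subgroup.m_closed[OF sH] by auto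
qed

lemma main_aux:
  fixes H J J' :: "'a set" and g :: 'a and b :: int
  assumes "subgroup H G" and "subgroup J G"
    and "H \<noteq> carrier G"
    and "card (cosets_in G J (H \<inter> J)) = 2"
    and "finite (cosets_in G H (H \<inter> J))"
    and "g \<in> J" and "g \<notin> H \<inter> J"
    and "odd b"
    and "subgroup J' G"
    and "generate G {g [^]\<^bsub>G\<^esub> b} \<subseteq> J'" and "J' \<subseteq> J"
    and "finite (cosets_in G J J')"
  shows "let K = H \<inter> conj_sub G H g;
             lam = card (cosets_in G K (H \<inter> J));
             L = generate G (K \<union> {g});
             \<mu> = card (cosets_in G J J')
         in card (cosets_in G J' (H \<inter> J')) = 2
          \<and> finite (cosets_in G H (H \<inter> J'))
          \<and> G_arc_transitive_cos G (Cos G H J')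
          \<and> G_extender G \<mu> (Cos G H J') (Cos G H J)
          \<and> G_extender G (lam * \<mu>) (Cos G H J') (Cos G H L)"
proof -
  note sH = assms(1) and sJ = assms(2) and sJ' = assms(9)
  have Hs: "H \<subseteq> carrier G" "J \<subseteq> carrier G" "J' \<subseteq> carrier G" using sH sJ sJ' subgroup.subset by auto
  have gJ: "g \<in> J" using assms(6) .
  have gc: "g \<in> carrier G" using gJ Hs by auto
  have gH: "g \<notin> H" using assms(6,7) by auto
  have sHJ: "subgroup (H \<inter> J) G" using sH sJ subgroups_Inter_pair by blast
  have F1: "\<forall>a\<in>J. a \<in> H \<or> a \<otimes> inv g \<in> H"
  proof
    fix a assume aJ: "a \<in> J"
    have ac: "a \<in> carrier G" using aJ Hs by auto
    show "a \<in> H \<or> a \<otimes> inv g \<in> H"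
    proof (cases "a \<in> H")
      case False
      let ?C = "cosets_in G J (H \<inter> J)"
      have i0: "(H \<inter> J) #> \<one> \<in> ?C" "(H \<inter> J) #> g \<in> ?C" "(H \<inter> J) #> a \<in> ?C"
        using aJ gJ subgroup.one_closed[OF sJ] by (auto simp: cosets_in_def)
      have e1: "(H \<inter> J) #> \<one> = H \<inter> J" by (rule coset_mult_one) (use Hs in blast)
      have n1: "(H \<inter> J) #> \<one> \<noteq> (H \<inter> J) #> g" using rcos_eq_self[OF sHJ gc] assms(7) e1 by auto
      have n2: "(H \<inter> J) #> \<one> \<noteq> (H \<inter> J) #> a" using rcos_eq_self[OF sHJ ac] False e1 by auto
      have "(H \<inter> J) #> g = (H \<inter> J) #> a" using three_in_two[OF assms(4) i0 n1 n2] .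
      then have "a \<otimes> inv g \<in> H \<inter> J" using rcos_eq[OF sHJ ac gc] by simp
      then show ?thesis by simp
    qed simp
  qed
  have gg: "g \<otimes> g \<in> H"
  proof (rule ccontr)
    assume "g \<otimes> g \<notin> H"
    then have "g \<otimes> g \<otimes> inv g \<in> H" using F1 gJ subgroup.m_closed[OF sJ] by blast
    then show False using gc gH by (simp add: m_assoc)
  qed
  have F2: "\<forall>a\<in>J. a \<in> H \<or> inv g \<otimes> a \<in> H"
  proof
    fix a assume aJ: "a \<in> J"
    have ac: "a \<in> carrier G" using aJ Hs by auto
    show "a \<in> H \<or> inv g \<otimes> a \<in> H"
    proof (cases "a \<in> H")
      case False
      have "inv a \<notin> H" using False subgroup.m_inv_closed[OF sH] ac by fastforce
      then have "inv a \<otimes> inv g \<in> H" using F1 aJ subgroup.m_inv_closed[OF sJ] by blast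
      then have "inv (inv a \<otimes> inv g) \<in> H" using subgroup.m_inv_closed[OF sH] by blast
      then have ga: "g \<otimes> a \<in> H" using ac gc by (simp add: inv_mult_group)
      have "inv (g \<otimes> g) \<otimes> (g \<otimes> a) \<in> H"
        using ga gg subgroup.m_inv_closed[OF sH] subgroup.m_closed[OF sH] by blast
      moreover have "inv (g \<otimes> g) \<otimes> (g \<otimes> a) = inv g \<otimes> a" using ac gc by (simp add: inv_mult_group m_assoc)
      ultimately show ?thesis by simp
    qed simp
  qed
  define c where "c = g [^] b"
  obtain k where bk: "b = 2 * k + 1" using assms(8) by (metis oddE)
  define h0 where "h0 = (g \<otimes> g) [^] k"
  have h0H: "h0 \<in> H" using subgroup_int_pow_closed[OF sH gg] h0_def by simp
  have h0c: "h0 \<in> carrier G" using h0H Hs by auto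
  have g2: "g [^] (2::int) = g \<otimes> g" using int_pow_mult[OF gc, of 1 1] gc by simp
  have g2k: "g [^] (2 * k) = h0" using int_pow_pow[OF gc, of 2 k] g2 h0_def by simp
  have c1: "c = g \<otimes> h0" using int_pow_mult[OF gc, of 1 "2*k"] gc g2k bk c_def by (simp add: add.commute)
  have c2: "c = h0 \<otimes> g" using int_pow_mult[OF gc, of "2*k" 1] gc g2k bk c_def by simp
  have cc: "c \<in> carrier G" using c1 gc h0c by simp
  have cJ': "c \<in> J'" using assms(10) generate.incl[of c "{c}" G] c_def by auto
  have cH: "c \<notin> H"
  proof
    assume "c \<in> H"
    then have "c \<otimes> inv h0 \<in> H" using h0H subgroup.m_closed[OF sH] subgroup.m_inv_closed[OF sH] by blast
    then show False using c1 gc h0c gH by (simp add: m_assoc)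
  qed
  have RJ': "\<forall>m\<in>J'. m \<in> H \<or> inv c \<otimes> m \<in> H"
  proof
    fix m assume mJ': "m \<in> J'"
    have mc: "m \<in> carrier G" using mJ' Hs by auto
    show "m \<in> H \<or> inv c \<otimes> m \<in> H"
    proof (cases "m \<in> H")
      case False
      then have "inv g \<otimes> m \<in> H" using F2 mJ' assms(11) by blast
      then have "inv h0 \<otimes> (inv g \<otimes> m) \<in> H" using h0H subgroup.m_closed[OF sH] subgroup.m_inv_closed[OF sH] by blast
      moreover have "inv h0 \<otimes> (inv g \<otimes> m) = inv c \<otimes> m" using c1 gc h0c mc by (simp add: inv_mult_group m_assoc)
      ultimately show ?thesis by simp
    qed simp
  qed
  define K where "K = H \<inter> conj_sub G H g"
  have sK: "subgroup K G" using K_def sH conj_sub_subgroup[OF gc sH] subgroups_Inter_pair by blast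
  have Kmem: "x \<in> K \<longleftrightarrow> x \<in> H \<and> g \<otimes> x \<otimes> inv g \<in> H" for x
    using conj_sub_mem[OF gc sH] K_def Hs by auto
  have KH: "K \<subseteq> H" using K_def by auto
  have Kc: "K \<subseteq> carrier G" using KH Hs by auto
  have C1: "inv g \<otimes> x \<otimes> g \<in> K" if x: "x \<in> K" for x
  proof -
    have xc: "x \<in> carrier G" using x Kc by auto
    have a: "g \<otimes> x \<otimes> inv g \<in> H" "x \<in> H" using x Kmem by auto
    have "inv (g \<otimes> g) \<otimes> (g \<otimes> x \<otimes> inv g) \<otimes> (g \<otimes> g) \<in> H"
      using a gg subgroup.m_closed[OF sH] subgroup.m_inv_closed[OF sH] by blast
    moreover have "inv (g \<otimes> g) \<otimes> (g \<otimes> x \<otimes> inv g) \<otimes> (g \<otimes> g) = inv g \<otimes> x \<otimes> g"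
      using xc gc by (simp add: inv_mult_group m_assoc)
    moreover have "g \<otimes> (inv g \<otimes> x \<otimes> g) \<otimes> inv g = x" using xc gc by (simp add: m_assoc)
    ultimately show ?thesis using Kmem a by simp
  qed
  have C3: "g \<otimes> x \<otimes> inv g \<in> K" if x: "x \<in> K" for x
  proof -
    have xc: "x \<in> carrier G" using x Kc by auto
    have a: "g \<otimes> x \<otimes> inv g \<in> H" "x \<in> H" using x Kmem by auto
    have "(g \<otimes> g) \<otimes> x \<otimes> inv (g \<otimes> g) \<in> H"
      using a gg subgroup.m_closed[OF sH] subgroup.m_inv_closed[OF sH] by blast
    moreover have "(g \<otimes> g) \<otimes> x \<otimes> inv (g \<otimes> g) = g \<otimes> (g \<otimes> x \<otimes> inv g) \<otimes> inv g"
      using xc gc by (simp add: inv_mult_group m_assoc)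
    ultimately show ?thesis using Kmem a by simp
  qed
  have ggK: "g \<otimes> g \<in> K" using Kmem gg gc by (simp add: m_assoc)
  have iggK: "inv g \<otimes> inv g \<in> K"
  proof -
    have "inv (g \<otimes> g) \<in> K" using ggK subgroup.m_inv_closed[OF sK] by blast
    then show ?thesis using gc by (simp add: inv_mult_group)
  qed
  have gK: "g \<notin> K" using gH KH by auto
  have HJK: "H \<inter> J \<subseteq> K"
  proof
    fix t assume t: "t \<in> H \<inter> J"
    have tc: "t \<in> carrier G" using t Hs by auto
    have "g \<otimes> t \<otimes> inv g \<in> J" using t gJ subgroup.m_closed[OF sJ] subgroup.m_inv_closed[OF sJ] by blast
    moreover have "inv g \<otimes> (g \<otimes> t \<otimes> inv g) \<notin> H"
    proof
      assume "inv g \<otimes> (g \<otimes> t \<otimes> inv g) \<in> H"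
      then have "t \<otimes> inv g \<in> H" using tc gc by (simp add: m_assoc)
      then have "inv t \<otimes> (t \<otimes> inv g) \<in> H" using t subgroup.m_closed[OF sH] subgroup.m_inv_closed[OF sH] by blast
      then have "inv g \<in> H" using tc gc by simp
      then have "inv (inv g) \<in> H" using subgroup.m_inv_closed[OF sH] by blast
      then show False using gc gH by simp
    qed
    ultimately have "g \<otimes> t \<otimes> inv g \<in> H" using F2 by blast
    then show "t \<in> K" using Kmem t by auto
  qed
  define L where "L = generate G (K \<union> {g})"
  have KgC: "K \<union> {g} \<subseteq> carrier G" using Kc gc by auto
  have sL: "subgroup L G" using generate_is_subgroup[OF KgC] L_def by simp
  have KL: "K \<subseteq> L" and gL: "g \<in> L" using generate.incl[of _ "K \<union> {g}" G] L_def by auto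
  have LR0: "m \<in> carrier G \<and> (m \<in> K \<or> inv g \<otimes> m \<in> K)" if m: "m \<in> L" for m
    using m unfolding L_def
  proof (induction m rule: generate.induct)
    case one
    then show ?case using subgroup.one_closed[OF sK] by simp
  next
    case (incl h)
    then show ?case using Kc gc subgroup.one_closed[OF sK] by auto
  next
    case (inv h)
    then show ?case using Kc gc subgroup.m_inv_closed[OF sK] iggK by auto
  next
    case (eng h1 h2)
    have c1: "h1 \<in> carrier G" "h2 \<in> carrier G" using eng.IH by auto
    have "h1 \<otimes> h2 \<in> K \<or> inv g \<otimes> (h1 \<otimes> h2) \<in> K"
    proof (cases "h1 \<in> K")
      case True
      show ?thesis
      proof (cases "h2 \<in> K")
        case True
        then show ?thesis using \<open>h1 \<in> K\<close> subgroup.m_closed[OF sK] by blast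
      next
        case False
        then have i2: "inv g \<otimes> h2 \<in> K" using eng.IH by blast
        have "(inv g \<otimes> h1 \<otimes> g) \<otimes> (inv g \<otimes> h2) \<in> K"
          using C1[OF \<open>h1 \<in> K\<close>] i2 subgroup.m_closed[OF sK] by blast
        moreover have "(inv g \<otimes> h1 \<otimes> g) \<otimes> (inv g \<otimes> h2) = inv g \<otimes> (h1 \<otimes> h2)"
          using c1 gc by (simp add: m_assoc)
        ultimately show ?thesis by simp
      qed
    next
      case False
      then have i1: "inv g \<otimes> h1 \<in> K" using eng.IH by blast
      show ?thesis
      proof (cases "h2 \<in> K")
        case True
        have "(inv g \<otimes> h1) \<otimes> h2 \<in> K" using i1 True subgroup.m_closed[OF sK] by blast
        then show ?thesis using c1 gc by (simp add: m_assoc)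
      next
        case False
        then have i2: "inv g \<otimes> h2 \<in> K" using eng.IH by blast
        have "(g \<otimes> g) \<otimes> (inv g \<otimes> (inv g \<otimes> h1) \<otimes> g) \<otimes> (inv g \<otimes> h2) \<in> K"
          using C1[OF i1] i2 ggK subgroup.m_closed[OF sK] by blast
        moreover have "(g \<otimes> g) \<otimes> (inv g \<otimes> (inv g \<otimes> h1) \<otimes> g) \<otimes> (inv g \<otimes> h2) = h1 \<otimes> h2"
          using c1 gc by (simp add: m_assoc)
        ultimately show ?thesis by simp
      qed
    qed
    then show ?case using c1 by simp
  qed
  have RL: "\<forall>m\<in>L. m \<in> H \<or> inv g \<otimes> m \<in> H" using LR0 KH by blast
  have JL: "J \<subseteq> L"
  proof
    fix a assume aJ: "a \<in> J"
    have ac: "a \<in> carrier G" using aJ Hs by auto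
    show "a \<in> L"
    proof (cases "a \<in> H")
      case True
      then show ?thesis using aJ HJK KL by auto
    next
      case False
      then have "inv g \<otimes> a \<in> H \<inter> J" using F2 aJ gJ subgroup.m_closed[OF sJ] subgroup.m_inv_closed[OF sJ] by blast
      then have "inv g \<otimes> a \<in> L" using HJK KL by auto
      then have "g \<otimes> (inv g \<otimes> a) \<in> L" using gL subgroup.m_closed[OF sL] by blast
      then show ?thesis using ac gc by simp
    qed
  qed
  have LK2: "card (cosets_in G L K) = 2"
  proof -
    have "cosets_in G L K = {K, K #> g}"
    proof
      show "cosets_in G L K \<subseteq> {K, K #> g}"
      proof
        fix Q assume "Q \<in> cosets_in G L K"
        then obtain m where m: "m \<in> L" "Q = K #> m" by (auto simp: cosets_in_def)
        have mc: "m \<in> carrier G" using LR0 m by auto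
        show "Q \<in> {K, K #> g}"
        proof (cases "m \<in> K")
          case True
          then show ?thesis using rcos_eq_self[OF sK mc] m by simp
        next
          case False
          then have "inv g \<otimes> m \<in> K" using LR0 m by blast
          then have "g \<otimes> (inv g \<otimes> m) \<otimes> inv g \<in> K" using C3 by blast
          then have "m \<otimes> inv g \<in> K" using mc gc by simp
          then show ?thesis using rcos_eq[OF sK mc gc] m by simp
        qed
      qed
    next
      have m1: "K #> \<one> \<in> cosets_in G L K" "K #> g \<in> cosets_in G L K"
        unfolding cosets_in_def using gL subgroup.one_closed[OF sL] by blast+
      have "K #> \<one> = K" using coset_mult_one[OF Kc] .
      then show "{K, K #> g} \<subseteq> cosets_in G L K" using m1 by simp
    qed
    moreover have "K \<noteq> K #> g" using rcos_eq_self[OF sK gc] gK by auto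
    ultimately show ?thesis by simp
  qed
  define lam where "lam = card (cosets_in G K (H \<inter> J))"
  define mu where "mu = card (cosets_in G J J')"
  have finKHJ: "finite (cosets_in G K (H \<inter> J))"
    using assms(5) KH finite_subset[of "cosets_in G K (H \<inter> J)" "cosets_in G H (H \<inter> J)"]
    by (auto simp: cosets_in_def)
  have finLK: "finite (cosets_in G L K)" by (rule card_ge_0_finite) (simp add: LK2)
  have i1: "finite (cosets_in G L (H \<inter> J)) \<and> card (cosets_in G L (H \<inter> J)) = 2 * lam"
    using idx_mult[OF sHJ sK sL HJK KL finLK finKHJ] LK2 lam_def by simp
  have finLJ: "finite (cosets_in G L J)"
    using idx_mono_fin[OF sHJ sJ _ _ ] i1 sL subgroup.subset by blast
  have finJHJ: "finite (cosets_in G J (H \<inter> J))" by (rule card_ge_0_finite) (simp add: assms(4))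
  have "card (cosets_in G L (H \<inter> J)) = card (cosets_in G L J) * 2"
    using idx_mult[OF sHJ sJ sL _ JL finLJ finJHJ] assms(4) by auto
  then have LJ: "card (cosets_in G L J) = lam" using i1 by simp
  have i3: "finite (cosets_in G L J') \<and> card (cosets_in G L J') = lam * mu"
    using idx_mult[OF sJ' sJ sL assms(11) JL finLJ assms(12)] LJ mu_def by simp
  have J'L: "J' \<subseteq> L" using assms(11) JL by auto
  have sHJ': "subgroup (H \<inter> J') G" using sH sJ' subgroups_Inter_pair by blast
  have conj1: "card (cosets_in G J' (H \<inter> J')) = 2"
  proof -
    have "cosets_in G J' (H \<inter> J') = {H \<inter> J', (H \<inter> J') #> c}"
    proof
      show "cosets_in G J' (H \<inter> J') \<subseteq> {H \<inter> J', (H \<inter> J') #> c}"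
      proof
        fix Q assume "Q \<in> cosets_in G J' (H \<inter> J')"
        then obtain a where a: "a \<in> J'" "Q = (H \<inter> J') #> a" by (auto simp: cosets_in_def)
        have ac: "a \<in> carrier G" using a Hs by auto
        show "Q \<in> {H \<inter> J', (H \<inter> J') #> c}"
        proof (cases "a \<in> H")
          case True
          then show ?thesis using rcos_eq_self[OF sHJ' ac] a by simp
        next
          case False
          then have "a \<otimes> inv g \<in> H" using F1 a assms(11) by blast
          then have "a \<otimes> inv g \<otimes> inv h0 \<in> H" using h0H subgroup.m_closed[OF sH] subgroup.m_inv_closed[OF sH] by blast
          moreover have "a \<otimes> inv g \<otimes> inv h0 = a \<otimes> inv c" using c2 ac gc h0c by (simp add: inv_mult_group m_assoc)
          moreover have "a \<otimes> inv c \<in> J'" using a cJ' subgroup.m_closed[OF sJ'] subgroup.m_inv_closed[OF sJ'] by blast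
          ultimately have "a \<otimes> inv c \<in> H \<inter> J'" by simp
          then show ?thesis using rcos_eq[OF sHJ' ac cc] a by simp
        qed
      qed
    next
      have m1: "(H \<inter> J') #> \<one> \<in> cosets_in G J' (H \<inter> J')" "(H \<inter> J') #> c \<in> cosets_in G J' (H \<inter> J')"
        unfolding cosets_in_def using cJ' subgroup.one_closed[OF sJ'] by blast+
      have "(H \<inter> J') #> \<one> = H \<inter> J'" by (rule coset_mult_one) (use Hs in blast)
      then show "{H \<inter> J', (H \<inter> J') #> c} \<subseteq> cosets_in G J' (H \<inter> J')" using m1 by simp
    qed
    moreover have "H \<inter> J' \<noteq> (H \<inter> J') #> c" using rcos_eq_self[OF sHJ' cc] cH by auto
    ultimately show ?thesis by simp
  qed
  have conj2: "finite (cosets_in G H (H \<inter> J'))"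
  proof -
    have f: "finite (cosets_in G (H \<inter> J) (H \<inter> J'))" using idx_inter_fin[OF sJ' sJ sH assms(11,12)] .
    have "H \<inter> J' \<subseteq> H \<inter> J" "H \<inter> J \<subseteq> H" using assms(11) by auto
    then show ?thesis using idx_mult[OF sHJ' sHJ sH _ _ assms(5) f] by blast
  qed
  have incJ: "y \<otimes> inv x \<in> J <#> H \<longleftrightarrow> (H #> x = H #> y \<or> H #> x = H #> (inv g \<otimes> y))"
    if "x \<in> carrier G" "y \<in> carrier G" for x y
    using inc_char[OF sH sJ gJ F2 that] .
  have incL: "y \<otimes> inv x \<in> L <#> H \<longleftrightarrow> (H #> x = H #> y \<or> H #> x = H #> (inv g \<otimes> y))"
    if "x \<in> carrier G" "y \<in> carrier G" for x y
    using inc_char[OF sH sL gL RL that] .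
  have incJ': "y \<otimes> inv x \<in> J' <#> H \<longleftrightarrow> (H #> x = H #> y \<or> H #> x = H #> (inv g \<otimes> y))"
    if xy: "x \<in> carrier G" "y \<in> carrier G" for x y
  proof -
    have e: "(inv c \<otimes> y) \<otimes> inv (inv g \<otimes> y) = inv h0" using c1 xy gc h0c by (simp add: inv_mult_group m_assoc)
    have "H #> (inv c \<otimes> y) = H #> (inv g \<otimes> y)"
      using rcos_eq[OF sH, of "inv c \<otimes> y" "inv g \<otimes> y"] e cc gc xy h0H subgroup.m_inv_closed[OF sH] by simp
    then show ?thesis using inc_char[OF sH sJ' cJ' RJ' xy] by simp
  qed
  have arcJ': "G_arc_transitive_cos G (Cos G H J')" using arc_trans_Cos[OF sH sJ' cJ' cH RJ'] .
  have arcJ: "G_arc_transitive_cos G (Cos G H J)" using arc_trans_Cos[OF sH sJ gJ gH F2] .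
  have arcL: "G_arc_transitive_cos G (Cos G H L)" using arc_trans_Cos[OF sH sL gL gH RL] .
  have iso1: "mg_iso (Cos G H J') (mext (Cos G H J) mu)"
    using mext_iso[OF sH sJ' sJ assms(11,12)] incJ incJ' mu_def by simp
  have iso2: "mg_iso (Cos G H J') (mext (Cos G H L) (lam * mu))"
    using mext_iso[OF sH sJ' sL J'L] i3 incL incJ' by simp
  show ?thesis
    unfolding Let_def K_def[symmetric] L_def[symmetric] lam_def[symmetric] mu_def[symmetric]
      G_extender_def
    using conj1 conj2 arcJ' arcJ arcL iso1 iso2 by blast
qed

end

theorem lemma2p9:
  fixes G :: "('a, 'c) monoid_scheme" and H J J' :: "'a set" and g :: 'a and b :: int
  assumes "group G"
    and "subgroup H G" and "subgroup J G"
    and "H \<noteq> carrier G"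
    and "card (cosets_in G J (H \<inter> J)) = 2"
    and "finite (cosets_in G H (H \<inter> J))"
    and "g \<in> J" and "g \<notin> H \<inter> J"
    and "odd b"
    and "subgroup J' G"
    and "generate G {g [^]\<^bsub>G\<^esub> b} \<subseteq> J'" and "J' \<subseteq> J"
    and "finite (cosets_in G J J')"
  shows "let K = H \<inter> conj_sub G H g;
             lam = card (cosets_in G K (H \<inter> J));
             L = generate G (K \<union> {g});
             \<mu> = card (cosets_in G J J')
         in card (cosets_in G J' (H \<inter> J')) = 2
          \<and> finite (cosets_in G H (H \<inter> J'))
          \<and> G_arc_transitive_cos G (Cos G H J')
          \<and> G_extender G \<mu> (Cos G H J') (Cos G H J)
          \<and> G_extender G (lam * \<mu>) (Cos G H J') (Cos G H L)"
  using group.main_aux[OF assms] .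


end
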